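(* Consider binary node classification with classes $\{0,1\}$, and let $k\in\{0,1\}$. Let $c_0,c_1\in(0,1)$ be the class homophily parameters, and assume the classes are balanced, i.e. $P(\hat{Y}=0)=P(\hat{Y}=1)$, and the graph is heterophilic, i.e. $c_k < 1-c_{1-k}$. Then for any node $i$ with neighborhood $\mathcal{N}(i)$ and observed neighbor labels $\{Y_j=y_j\}_{j\in\mathcal{N}(i)}$, $$P\big(\hat{Y}_i = k \mid \{Y_j=y_j\}_{j\in\mathcal{N}(i)}\big) > 0.5$$ if and only if $$|\mathcal{N}_k(i)| < |\mathcal{N}_{1-k}(i)| \cdot \frac{\log c_{1-k} - \log (1 - c_k)}{\log c_k - \log (1 - c_{1-k})}.$$
   Context: Model: each node $i$ has a (latent/soft) class $\hat{Y}_i\in\{0,1\}$, and each neighbor $j\in\mathcal{N}(i)$ has an observed label $Y_j\in\{0,1\}$. Given $\hat{Y}_i$, the neighbor labels are conditionally independent with $P(Y_j=k\mid \hat{Y}_i=k)=c_k$ and $P(Y_j=1-k\mid\hat{Y}_i=k)=1-c_k$ for $k\in\{0,1\}$ ($c_k$ is called the class homophily of class $k$). The posterior is obtained by Bayes' rule: $P(\hat Y_i=k\mid\{Y_j=y_j\}_{j\in\mathcal N(i)})\propto P(\hat Y_i=k)\prod_{j\in\mathcal N(i)}P(Y_j=y_j\mid \hat Y_i=k)$. Notation: $\mathcal{N}_k(i)=\{j\in\mathcal{N}(i): y_j=k\}$ and $\mathcal{N}_{1-k}(i)=\{j\in\mathcal{N}(i): y_j=1-k\}$. *)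

theory Defs
  imports "HOL-Analysis.Analysis"
begin

text \<open>Classes are the naturals 0 and 1. c k is the class homophily of class k.
  Conditional likelihood of a single neighbour label yj given latent class k.\<close>
definition lik :: "(nat \<Rightarrow> real) \<Rightarrow> nat \<Rightarrow> nat \<Rightarrow> real" where
  "lik c k yj = (if yj = k then c k else 1 - c k)"

definition joint :: "(nat \<Rightarrow> real) \<Rightarrow> (nat \<Rightarrow> real) \<Rightarrow> 'a set \<Rightarrow> ('a \<Rightarrow> nat) \<Rightarrow> nat \<Rightarrow> real" where
  "joint prior c N y k = prior k * (\<Prod>j\<in>N. lik c k (y j))"

definition posterior :: "(nat \<Rightarrow> real) \<Rightarrow> (nat \<Rightarrow> real) \<Rightarrow> 'a set \<Rightarrow> ('a \<Rightarrow> nat) \<Rightarrow> nat \<Rightarrow> real" where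
  "posterior prior c N y k = joint prior c N y k / (\<Sum>k'\<in>{0,1}. joint prior c N y k')"

definition nbrs_with :: "'a set \<Rightarrow> ('a \<Rightarrow> nat) \<Rightarrow> nat \<Rightarrow> 'a set" where
  "nbrs_with N y k = {j \<in> N. y j = k}"

end

theory Submission
  imports Defs
begin

lemma prod_split:
  fixes c :: "nat \<Rightarrow> real" and N :: "'a set" and y :: "'a \<Rightarrow> nat"
  assumes finN: "finite N" and labels: "\<forall>j\<in>N. y j \<in> {0, 1}" and k: "k \<in> {0,1}" and l: "l \<in> {0,1}"
  shows "(\<Prod>j\<in>N. lik c l (y j)) =
     (\<Prod>j\<in>nbrs_with N y k. lik c l k) * (\<Prod>j\<in>nbrs_with N y (1-k). lik c l (1-k))"
proof -
  have U: "N = nbrs_with N y k \<union> nbrs_with N y (1-k)"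
    using labels k by (auto simp: nbrs_with_def)
  have D: "nbrs_with N y k \<inter> nbrs_with N y (1-k) = {}"
    using k by (auto simp: nbrs_with_def)
  have f1: "finite (nbrs_with N y k)" "finite (nbrs_with N y (1-k))"
    using finN by (auto simp: nbrs_with_def)
  have "(\<Prod>j\<in>N. lik c l (y j)) = (\<Prod>j\<in>nbrs_with N y k. lik c l (y j)) * (\<Prod>j\<in>nbrs_with N y (1-k). lik c l (y j))"
    by (subst U, rule prod.union_disjoint[OF f1 D])
  also have "\<dots> = (\<Prod>j\<in>nbrs_with N y k. lik c l k) * (\<Prod>j\<in>nbrs_with N y (1-k). lik c l (1-k))"
    by (auto simp: nbrs_with_def intro!: arg_cong2[where f="(*)"] prod.cong)
  finally show ?thesis .
qed

theorem mainTheorem2: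
  fixes c prior :: "nat \<Rightarrow> real" and k :: nat and N :: "'a set" and y :: "'a \<Rightarrow> nat"
  assumes k: "k \<in> {0, 1}"
    and c0: "0 < c 0" "c 0 < 1" and c1: "0 < c 1" "c 1 < 1"
    and prior_nonneg: "prior 0 \<ge> 0" "prior 1 \<ge> 0"
    and prior_sum: "prior 0 + prior 1 = 1"
    and balanced: "prior 0 = prior 1"
    and heterophilic: "c k < 1 - c (1 - k)"
    and finN: "finite N"
    and labels: "\<forall>j\<in>N. y j \<in> {0, 1}"
  shows "posterior prior c N y k > 0.5 \<longleftrightarrow>
    real (card (nbrs_with N y k)) < real (card (nbrs_with N y (1 - k))) *
      ((ln (c (1 - k)) - ln (1 - c k)) / (ln (c k) - ln (1 - c (1 - k))))"
proof -
  define a where "a = c k"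
  define b where "b = c (1-k)"
  define n where "n = card (nbrs_with N y k)"
  define m where "m = card (nbrs_with N y (1-k))"
  have k': "1 - k \<in> {0,1}" using k by auto
  have ab: "0 < a" "a < 1" "0 < b" "b < 1" "a < 1 - b"
    using k c0 c1 heterophilic by (auto simp: a_def b_def)
  have kk: "1 - k \<noteq> k" "k \<noteq> 1 - k" using k by auto
  have p: "prior k = 1/2" "prior (1-k) = 1/2" using k prior_sum balanced by auto
  have l1: "lik c k k = a" "lik c k (1-k) = 1 - a" "lik c (1-k) k = 1 - b" "lik c (1-k) (1-k) = b"
    using kk by (auto simp: lik_def a_def b_def)
  have Jk: "joint prior c N y k = 1/2 * (a ^ n * (1-a) ^ m)"
    unfolding joint_def prod_split[OF finN labels k k] l1 p(1) n_def m_def by simp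
  have Jl: "joint prior c N y (1-k) = 1/2 * ((1-b) ^ n * b ^ m)"
    unfolding joint_def prod_split[OF finN labels k k'] l1 p(2) n_def m_def by simp
  have S: "(\<Sum>k'\<in>{0,1}. joint prior c N y k') = joint prior c N y k + joint prior c N y (1-k)"
    using k by auto
  define A where "A = a ^ n * (1-a) ^ m"
  define B where "B = (1-b) ^ n * b ^ m"
  have Ap: "A > 0" "B > 0" using ab by (auto simp: A_def B_def)
  have post: "posterior prior c N y k = A / (A + B)"
    unfolding posterior_def S Jk Jl A_def[symmetric] B_def[symmetric] by simp
  have "posterior prior c N y k > 0.5 \<longleftrightarrow> B < A"
    using Ap unfolding post by (simp add: field_simps)
  also have "\<dots> \<longleftrightarrow> ln B < ln A" using Ap by simp
  also have "\<dots> \<longleftrightarrow> n * ln (1-b) + m * ln b < n * ln a + m * ln (1-a)"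
    using ab by (simp add: A_def B_def ln_mult ln_realpow)
  also have "\<dots> \<longleftrightarrow> n * (ln a - ln (1-b)) > m * (ln b - ln (1-a))"
    by (simp add: algebra_simps)
  also have "\<dots> \<longleftrightarrow> real n < real m * ((ln b - ln (1-a)) / (ln a - ln (1-b)))"
  proof -
    have "ln a - ln (1-b) < 0" using ab by simp
    then show ?thesis by (simp add: field_simps)
  qed
  finally show ?thesis by (simp add: a_def b_def n_def m_def)
qed

end
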